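(* Let $P$ be a finite poset and $t\geq 2$ a fixed integer. Then either $\mathrm{sat}^{\star}([t]^n,P)=O(1)$ as $n\to\infty$, or $\mathrm{sat}^{\star}([t]^n,P)\geq\log_t(n)$ for all $n$.
   Context: For positive integers $n,t$, $[n]=\{1,\dots,n\}$ and the hypergrid $[t]^n$ is the set of functions $f:[n]\to[t]$, partially ordered by $f\leq g$ iff $f(i)\leq g(i)$ for all $i\in[n]$. An induced copy of a poset $P$ in a family $\mathcal{F}\subseteq[t]^n$ is an injective map $\phi:P\to\mathcal{F}$ such that $\phi(x)\leq\phi(y)$ iff $x\leq_P y$. A family $\mathcal{F}\subseteq[t]^n$ is induced $P$-free if it contains no induced copy of $P$; it is induced $P$-saturated if it is induced $P$-free and for every $f\in[t]^n\setminus\mathcal{F}$ the family $\mathcal{F}\cup\{f\}$ contains an induced copy of $P$. Whenever $P$ embeds as an induced subposet of $[t]^n$, $\mathrm{sat}^{\star}([t]^n,P)$ denotes the minimum size of an induced $P$-saturated family in $[t]^n$. *)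

theory Defs
  imports Complex_Main
begin

text \<open>The hypergrid [t]^n: functions [n] -> [t], represented extensionally as
  functions nat => nat that are 0 outside [n] = {1..n}.\<close>
definition hypergrid :: "nat \<Rightarrow> nat \<Rightarrow> (nat \<Rightarrow> nat) set" where
  "hypergrid t n = {f. (\<forall>i\<in>{1..n}. f i \<in> {1..t}) \<and> (\<forall>i. i \<notin> {1..n} \<longrightarrow> f i = 0)}"

definition grid_le :: "nat \<Rightarrow> (nat \<Rightarrow> nat) \<Rightarrow> (nat \<Rightarrow> nat) \<Rightarrow> bool" where
  "grid_le n f g \<longleftrightarrow> (\<forall>i\<in>{1..n}. f i \<le> g i)"

definition induced_copy :: "nat \<Rightarrow> ('p::order \<Rightarrow> (nat \<Rightarrow> nat)) \<Rightarrow> (nat \<Rightarrow> nat) set \<Rightarrow> bool" where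
  "induced_copy n \<phi> F \<longleftrightarrow> inj \<phi> \<and> (\<forall>x. \<phi> x \<in> F) \<and>
     (\<forall>x y. grid_le n (\<phi> x) (\<phi> y) \<longleftrightarrow> x \<le> y)"

definition contains_induced :: "'p::order itself \<Rightarrow> nat \<Rightarrow> (nat \<Rightarrow> nat) set \<Rightarrow> bool" where
  "contains_induced _ n F \<longleftrightarrow> (\<exists>\<phi>::'p \<Rightarrow> (nat \<Rightarrow> nat). induced_copy n \<phi> F)"

definition induced_free :: "'p::order itself \<Rightarrow> nat \<Rightarrow> (nat \<Rightarrow> nat) set \<Rightarrow> bool" where
  "induced_free P n F \<longleftrightarrow> \<not> contains_induced P n F"

definition induced_saturated :: "'p::order itself \<Rightarrow> nat \<Rightarrow> nat \<Rightarrow> (nat \<Rightarrow> nat) set \<Rightarrow> bool" where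
  "induced_saturated P t n F \<longleftrightarrow> F \<subseteq> hypergrid t n \<and> induced_free P n F \<and>
     (\<forall>f \<in> hypergrid t n - F. contains_induced P n (insert f F))"

definition embeds_in_grid :: "'p::order itself \<Rightarrow> nat \<Rightarrow> nat \<Rightarrow> bool" where
  "embeds_in_grid P t n \<longleftrightarrow> contains_induced P n (hypergrid t n)"

text \<open>sat*([t]^n, P): minimum size of an induced P-saturated family
  (meaningful when P embeds in [t]^n).\<close>
definition sat_star :: "'p::order itself \<Rightarrow> nat \<Rightarrow> nat \<Rightarrow> nat" where
  "sat_star P t n = Inf {card F | F. induced_saturated P t n F}"

end

theory Submission
  imports Defs "HOL-Library.FuncSet"
begin

lemma hypergrid_finite: "finite (hypergrid t n)"
proof -
  have "hypergrid t n = {f. \<forall>x. (x \<in> {1..n} \<longrightarrow> f x \<in> {1..t}) \<and> (x \<notin> {1..n} \<longrightarrow> f x = 0)}"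
    unfolding hypergrid_def by blast
  then show ?thesis using finite_set_of_finite_funs[of "{1..n}" "{1..t}" 0] by simp
qed

lemma exists_saturated:
  "\<exists>F. induced_saturated TYPE('p::{order,finite}) t n F"
proof -
  let ?A = "{F. F \<subseteq> hypergrid t n \<and> induced_free TYPE('p) n F}"
  have fin: "finite ?A" using hypergrid_finite by (simp add: finite_Pow_iff)
  have "{} \<in> ?A"
    by (simp add: induced_free_def contains_induced_def induced_copy_def)
  then obtain F where F: "F \<in> ?A" and mx: "\<forall>b\<in>?A. F \<le> b \<longrightarrow> F = b"
    using finite_has_maximal[OF fin] by blast
  have "induced_saturated TYPE('p) t n F"
    unfolding induced_saturated_def
  proof (intro conjI ballI)
    show "F \<subseteq> hypergrid t n" "induced_free TYPE('p) n F" using F by auto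
  next
    fix f assume f: "f \<in> hypergrid t n - F"
    show "contains_induced TYPE('p) n (insert f F)"
    proof (rule ccontr)
      assume "\<not> contains_induced TYPE('p) n (insert f F)"
      then have "insert f F \<in> ?A" using F f by (auto simp: induced_free_def)
      then have "F = insert f F" using mx by blast
      then show False using f by blast
    qed
  qed
  then show ?thesis by blast
qed

lemma grid_le_upd: "grid_le n (f(Suc n := a)) (g(Suc n := b)) = grid_le n f g"
  unfolding grid_le_def by auto

lemma grid_le_Suc: "grid_le (Suc n) f g = (grid_le n f g \<and> f (Suc n) \<le> g (Suc n))"
  unfolding grid_le_def by (auto simp: le_Suc_eq)

lemma extend_step:
  fixes F :: "(nat \<Rightarrow> nat) set"
  assumes sat: "induced_saturated TYPE('p::{order,finite}) t n F"
    and ij: "i \<in> {1..n}" "j \<in> {1..n}" "i \<noteq> j" and tw: "\<forall>f\<in>F. f i = f j"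
  shows "\<exists>G. induced_saturated TYPE('p) t (Suc n) G \<and> card G = card F \<and> (\<forall>f\<in>G. f i = f j)"
proof -
  define E where "E = (\<lambda>f::nat\<Rightarrow>nat. f(Suc n := f i))"
  define D where "D = (\<lambda>f::nat\<Rightarrow>nat. f(Suc n := 0))"
  have Fsub: "F \<subseteq> hypergrid t n" and free: "induced_free TYPE('p) n F"
    and satur: "\<forall>f \<in> hypergrid t n - F. contains_induced TYPE('p) n (insert f F)"
    using sat unfolding induced_saturated_def by auto
  have hz: "f (Suc n) = 0" if "f \<in> hypergrid t n" for f
    using that unfolding hypergrid_def by auto
  have DE: "D (E f) = f" if "f \<in> hypergrid t n" for f
    using hz[OF that] unfolding D_def E_def by auto
  have injE: "inj_on E F"
    by (rule inj_on_inverseI[where g = D]) (use DE Fsub in blast)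
  have EH: "E f \<in> hypergrid t (Suc n)" if "f \<in> hypergrid t n" for f
    using that ij unfolding hypergrid_def E_def by auto
  have leE: "grid_le (Suc n) (E f) (E g) = grid_le n f g" for f g
  proof -
    have "grid_le (Suc n) (E f) (E g) = (grid_le n f g \<and> f i \<le> g i)"
      unfolding grid_le_Suc E_def grid_le_upd by simp
    also have "\<dots> = grid_le n f g" using ij unfolding grid_le_def by auto
    finally show ?thesis .
  qed
  define G where "G = E ` F"
  have Gsub: "G \<subseteq> hypergrid t (Suc n)" using EH Fsub G_def by blast
  have cardG: "card G = card F" using card_image[OF injE] G_def by simp
  have twG: "\<forall>f\<in>G. f i = f j" using tw ij unfolding G_def E_def by auto
  have freeG: "induced_free TYPE('p) (Suc n) G"
    unfolding induced_free_def contains_induced_def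
  proof
    assume "\<exists>\<phi>::'p \<Rightarrow> (nat \<Rightarrow> nat). induced_copy (Suc n) \<phi> G"
    then obtain \<phi> :: "'p \<Rightarrow> (nat \<Rightarrow> nat)" where c: "induced_copy (Suc n) \<phi> G" by blast
    have mem: "\<And>x. \<phi> x \<in> G" using c unfolding induced_copy_def by blast
    have EDphi: "E (D (\<phi> x)) = \<phi> x" for x
      using mem[of x] Fsub DE unfolding G_def by auto
    have DF: "D (\<phi> x) \<in> F" for x
      using mem[of x] Fsub DE unfolding G_def by auto
    have "induced_copy n (D \<circ> \<phi>) F"
      unfolding induced_copy_def
    proof (intro conjI allI)
      show "inj (D \<circ> \<phi>)"
      proof (rule injI)
        fix x y assume "(D \<circ> \<phi>) x = (D \<circ> \<phi>) y"
        then have "E (D (\<phi> x)) = E (D (\<phi> y))" by simp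
        then have "\<phi> x = \<phi> y" using EDphi by simp
        then show "x = y" using c unfolding induced_copy_def inj_def by blast
      qed
      fix x y
      show "(D \<circ> \<phi>) x \<in> F" using DF by simp
      have "grid_le n ((D \<circ> \<phi>) x) ((D \<circ> \<phi>) y) = grid_le (Suc n) (E (D (\<phi> x))) (E (D (\<phi> y)))"
        using leE by simp
      also have "\<dots> = grid_le (Suc n) (\<phi> x) (\<phi> y)" using EDphi by simp
      also have "\<dots> = (x \<le> y)" using c unfolding induced_copy_def by blast
      finally show "grid_le n ((D \<circ> \<phi>) x) ((D \<circ> \<phi>) y) = (x \<le> y)" .
    qed
    then show False using free unfolding induced_free_def contains_induced_def by blast
  qed
  have saturG: "contains_induced TYPE('p) (Suc n) (insert g G)"
    if g: "g \<in> hypergrid t (Suc n) - G" for g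
  proof -
    define mx where "mx = max (g i) (max (g j) (g (Suc n)))"
    define mn where "mn = min (g i) (min (g j) (g (Suc n)))"
    define h where "h = (\<lambda>l. if l = i then mx else if l = j then mn else if l = Suc n then 0 else g l)"
    have gv: "g l \<in> {1..t}" if "l \<in> {1..Suc n}" for l using g that unfolding hypergrid_def by blast
    have g0: "g l = 0" if "l \<notin> {1..Suc n}" for l using g that unfolding hypergrid_def by blast
    have "g i \<in> {1..t}" "g j \<in> {1..t}" "g (Suc n) \<in> {1..t}" using gv ij by auto
    then have mxv: "mx \<in> {1..t}" and mnv: "mn \<in> {1..t}" unfolding mx_def mn_def by auto
    have hH: "h \<in> hypergrid t n"
      unfolding hypergrid_def h_def using mxv mnv ij gv g0 by auto
    have cmp1: "grid_le n h f = grid_le (Suc n) g (E f)" if "f \<in> F" for f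
    proof -
      have fij: "f i = f j" using tw that by blast
      have "grid_le n h f = ((\<forall>l\<in>{1..n}-{i,j}. g l \<le> f l) \<and> mx \<le> f i \<and> mn \<le> f j)"
        unfolding grid_le_def h_def using ij by auto
      also have "\<dots> = ((\<forall>l\<in>{1..n}-{i,j}. g l \<le> f l) \<and> g i \<le> f i \<and> g j \<le> f j \<and> g (Suc n) \<le> f i)"
        unfolding mx_def mn_def using fij by auto
      also have "\<dots> = grid_le (Suc n) g (E f)"
        unfolding grid_le_Suc unfolding grid_le_def E_def using ij by auto
      finally show ?thesis .
    qed
    have cmp2: "grid_le n f h = grid_le (Suc n) (E f) g" if "f \<in> F" for f
    proof -
      have fij: "f i = f j" using tw that by blast
      have "grid_le n f h = ((\<forall>l\<in>{1..n}-{i,j}. f l \<le> g l) \<and> f i \<le> mx \<and> f j \<le> mn)"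
        unfolding grid_le_def h_def using ij by auto
      also have "\<dots> = ((\<forall>l\<in>{1..n}-{i,j}. f l \<le> g l) \<and> f i \<le> g i \<and> f j \<le> g j \<and> f i \<le> g (Suc n))"
        unfolding mx_def mn_def using fij by auto
      also have "\<dots> = grid_le (Suc n) (E f) g"
        unfolding grid_le_Suc unfolding grid_le_def E_def using ij by auto
      finally show ?thesis .
    qed
    have hF: "h \<notin> F"
    proof
      assume hF: "h \<in> F"
      then have "h i = h j" using tw by blast
      then have "mx = mn" using ij unfolding h_def by simp
      then have eq: "g j = g i" "g (Suc n) = g i" unfolding mx_def mn_def by linarith+
      have "g = E h"
      proof
        fix l
        show "g l = E h l"
          using eq ij unfolding E_def h_def mx_def mn_def by auto
      qed
      then have "g \<in> G" using hF G_def by blast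
      then show False using g by blast
    qed
    then obtain \<phi> :: "'p \<Rightarrow> (nat \<Rightarrow> nat)" where c: "induced_copy n \<phi> (insert h F)"
      using satur hH unfolding contains_induced_def by blast
    define \<psi> where "\<psi> = (\<lambda>x. if \<phi> x = h then g else E (\<phi> x))"
    have ph: "\<phi> x \<in> insert h F" for x using c unfolding induced_copy_def by blast
    have injphi: "inj \<phi>" using c unfolding induced_copy_def by blast
    have ordphi: "grid_le n (\<phi> x) (\<phi> y) = (x \<le> y)" for x y using c unfolding induced_copy_def by blast
    have gE: "g \<noteq> E f" if "f \<in> F" for f using g that G_def by blast
    have "induced_copy (Suc n) \<psi> (insert g G)"
      unfolding induced_copy_def
    proof (intro conjI allI)
      show "inj \<psi>"
      proof (rule injI)
        fix x y assume eq: "\<psi> x = \<psi> y"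
        have "\<phi> x = \<phi> y"
        proof (cases "\<phi> x = h"; cases "\<phi> y = h")
          assume "\<phi> x \<noteq> h" "\<phi> y \<noteq> h"
          then have "\<phi> x \<in> F" "\<phi> y \<in> F" using ph by auto
          moreover have "E (\<phi> x) = E (\<phi> y)" using eq \<open>\<phi> x \<noteq> h\<close> \<open>\<phi> y \<noteq> h\<close> unfolding \<psi>_def by simp
          ultimately show ?thesis using injE unfolding inj_on_def by blast
        next
          assume "\<phi> x = h" "\<phi> y \<noteq> h"
          then show ?thesis using eq gE ph[of y] unfolding \<psi>_def by auto
        next
          assume "\<phi> x \<noteq> h" "\<phi> y = h"
          then show ?thesis using eq gE ph[of x] unfolding \<psi>_def by auto
        qed auto
        then show "x = y" using injphi unfolding inj_def by blast
      qed
      fix x y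
      show "\<psi> x \<in> insert g G" using ph[of x] unfolding \<psi>_def G_def by auto
      have "grid_le (Suc n) (\<psi> x) (\<psi> y) = grid_le n (\<phi> x) (\<phi> y)"
      proof (cases "\<phi> x = h"; cases "\<phi> y = h")
        assume "\<phi> x \<noteq> h" "\<phi> y \<noteq> h"
        then show ?thesis using leE unfolding \<psi>_def by simp
      next
        assume a: "\<phi> x = h" "\<phi> y \<noteq> h"
        then have "\<phi> y \<in> F" using ph[of y] by auto
        then show ?thesis using a cmp1 unfolding \<psi>_def by simp
      next
        assume a: "\<phi> x \<noteq> h" "\<phi> y = h"
        then have "\<phi> x \<in> F" using ph[of x] by auto
        then show ?thesis using a cmp2 unfolding \<psi>_def by simp
      next
        assume a: "\<phi> x = h" "\<phi> y = h"
        then show ?thesis unfolding \<psi>_def grid_le_def by simp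
      qed
      then show "grid_le (Suc n) (\<psi> x) (\<psi> y) = (x \<le> y)" using ordphi by simp
    qed
    then show ?thesis unfolding contains_induced_def by blast
  qed
  have "induced_saturated TYPE('p) t (Suc n) G"
    unfolding induced_saturated_def using Gsub freeG saturG by blast
  then show ?thesis using cardG twG by blast
qed

theorem mainTheorem7:
  fixes t :: nat
  assumes "t \<ge> 2"
  shows "(\<exists>C N. \<forall>n\<ge>N. embeds_in_grid TYPE('p::{order,finite}) t n \<longrightarrow>
                 sat_star TYPE('p) t n \<le> C)
       \<or> (\<forall>n\<ge>1. embeds_in_grid TYPE('p) t n \<longrightarrow>
                 real (sat_star TYPE('p) t n) \<ge> log (real t) (real n))"
proof (cases "\<forall>n\<ge>1. embeds_in_grid TYPE('p) t n \<longrightarrow>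
                 real (sat_star TYPE('p) t n) \<ge> log (real t) (real n)")
  case True
  then show ?thesis by blast
next
  case False
  then obtain n0 where n0: "n0 \<ge> 1" and lt: "real (sat_star TYPE('p) t n0) < log (real t) (real n0)"
    by force
  let ?S = "{card F | F. induced_saturated TYPE('p) t n0 F}"
  have "?S \<noteq> {}" using exists_saturated[where 'p='p, of t n0] by blast
  then have "sat_star TYPE('p) t n0 \<in> ?S" unfolding sat_star_def by (rule Inf_nat_def1)
  then obtain F where satF: "induced_saturated TYPE('p) t n0 F"
    and cF0: "sat_star TYPE('p) t n0 = card F" by blast
  have cF: "card F = sat_star TYPE('p) t n0" using cF0 by simp
  define m where "m = card F"
  have Fsub: "F \<subseteq> hypergrid t n0" using satF unfolding induced_saturated_def by blast
  have finF: "finite F" using finite_subset[OF Fsub hypergrid_finite] .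
  have "real t powr real m < real n0"
    using lt cF assms n0 unfolding m_def by (subst less_log_iff[symmetric]) auto
  then have "real (t ^ m) < real n0" using assms by (simp add: powr_realpow)
  then have tm: "t ^ m < n0" by linarith
  define c where "c = (\<lambda>i. restrict (\<lambda>f::nat\<Rightarrow>nat. f i) F)"
  have cin: "c ` {1..n0} \<subseteq> F \<rightarrow>\<^sub>E {1..t}"
    using Fsub unfolding c_def hypergrid_def by auto
  have "card (F \<rightarrow>\<^sub>E {1..t}) = t ^ m" using card_PiE[OF finF, of "\<lambda>_. {1..t}"] unfolding m_def by simp
  have "\<not> inj_on c {1..n0}"
  proof
    assume "inj_on c {1..n0}"
    moreover have "finite (F \<rightarrow>\<^sub>E {1..t})" using finF by (simp add: finite_PiE)
    ultimately have "card {1..n0} \<le> card (F \<rightarrow>\<^sub>E {1..t})"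
      using card_inj_on_le cin by blast
    then show False using tm \<open>card (F \<rightarrow>\<^sub>E {1..t}) = t ^ m\<close> by simp
  qed
  then obtain i j where ij: "i \<in> {1..n0}" "j \<in> {1..n0}" "i \<noteq> j" "c i = c j"
    unfolding inj_on_def by blast
  have tw: "\<forall>f\<in>F. f i = f j"
  proof
    fix f assume "f \<in> F"
    then show "f i = f j" using fun_cong[OF ij(4), of f] unfolding c_def by simp
  qed
  have ext: "\<exists>G. induced_saturated TYPE('p) t (n0 + k) G \<and> card G = m \<and> (\<forall>f\<in>G. f i = f j)" for k
  proof (induction k)
    case 0
    then show ?case using satF tw m_def by auto
  next
    case (Suc k)
    then obtain G where G: "induced_saturated TYPE('p) t (n0 + k) G" "card G = m" "\<forall>f\<in>G. f i = f j"
      by blast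
    have "i \<in> {1..n0+k}" "j \<in> {1..n0+k}" using ij by auto
    from extend_step[OF G(1) this ij(3) G(3)] show ?case using G(2) by simp
  qed
  have "\<forall>n\<ge>n0. embeds_in_grid TYPE('p) t n \<longrightarrow> sat_star TYPE('p) t n \<le> m"
  proof (intro allI impI)
    fix n assume "n \<ge> n0"
    then obtain k where "n = n0 + k" using le_Suc_ex by blast
    then obtain G where "induced_saturated TYPE('p) t n G" "card G = m" using ext by blast
    then have "m \<in> {card F | F. induced_saturated TYPE('p) t n F}" by blast
    then show "sat_star TYPE('p) t n \<le> m" unfolding sat_star_def by (rule cInf_lower) simp
  qed
  then show ?thesis by blast
qed

end
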